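(* Let $R$ be a commutative ring and $\mathscr{M}$ a $\mathcal{B}$-diagram of $R$-modules such that $\mathrm{im}(\mathscr{M}(\mho_\sigma))\subseteq\ker(\mathscr{M}(\Omega_\sigma))$ for every vertex $\sigma$. If $0\ne m\in\mathscr{M}(\emptyset)$, then there exists a ray $(\sigma^i)$ in $\mathcal{B}$ such that exactly one of the following holds: (1) there exists $j\in\mathbb{N}$ with $m\in\widetilde{\mu}_{\le j}\ker(\mathscr{M}(\Omega_{\sigma^j}))\setminus\widetilde{\mu}_{\le j}\,\mathrm{im}(\mathscr{M}(\mho_{\sigma^j}))$; (2) for each $j\in\mathbb{N}$, $m\in\widetilde{\mu}_{\le j}M[j]\setminus\widetilde{\mu}_{\le j}0$, and so $m\in\bigcap_{i\in\mathbb{N}}\widetilde{\mu}_{\le i}M[i]\setminus\bigcup_{i\in\mathbb{N}}\widetilde{\mu}_{\le i}0$.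
   Context: The quiver $\mathcal{B}$: vertices are finite $0/1$-sequences including the empty sequence $\emptyset$; for each vertex $\sigma$ there are arrows $\Omega_\sigma\colon\sigma\to\sigma1$ and $\mho_\sigma\colon\sigma0\to\sigma$ ($\sigma1,\sigma0$ = $\sigma$ with $1$, resp. $0$, appended). A $\mathcal{B}$-diagram assigns $R$-modules to vertices and $R$-linear maps to arrows. A ray is a sequence $(\sigma^i)_{i\ge0}$ with $\sigma^0=\emptyset$ and $\sigma^i$ equal to $\sigma^{i-1}$ with one symbol appended; $\sigma_i=+$ if that symbol is $1$, $-$ if $0$. Given a ray, $M[i]=\mathscr{M}(\sigma^i)$, and $\mu_i$ ($i\ge1$) is the image of the arrow between $\sigma^{i-1}$ and $\sigma^i$: $\mu_i\colon M[i]\to M[i-1]$ if $\sigma_i=-$, $\mu_i\colon M[i-1]\to M[i]$ if $\sigma_i=+$. $\widetilde{\mu}_i\subseteq M[i]\oplus M[i-1]$ is $\{(x,\mu_i(x))\}$ if $\sigma_i=-$ and $\{(\mu_i(y),y)\}$ if $\sigma_i=+$. For $S\subseteq M[n]$, $\widetilde{\mu}_{\le n}S$ is the set of $m_0\in M[0]$ for which there are $m_i\in M[i]$ ($1\le i\le n$) with $m_n\in S$ and $(m_i,m_{i-1})\in\widetilde{\mu}_i$ for $1\le i\le n$; $\widetilde{\mu}_{\le0}S=S$; $\widetilde{\mu}_{\le i}0=\widetilde{\mu}_{\le i}\{0\}$. *)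

theory Defs
  imports "HOL-Algebra.Module"
begin

text \<open>Vertices of the quiver B: finite 0/1-sequences, encoded as bool lists
  (True = 1, False = 0); appending a symbol is appending at the end of the list.
  A B-diagram of R-modules is given by a module M sigma for every vertex (all modules
  share one element type) together with maps
  Om sigma : M sigma -> M (sigma @ [True])   (image of Omega_sigma) and
  Mh sigma : M (sigma @ [False]) -> M sigma  (image of Mho_sigma).\<close>

type_synonym vertex = "bool list"

definition linmap :: "('r, 'c) ring_scheme \<Rightarrow> ('r, 'm) module \<Rightarrow> ('r, 'm) module \<Rightarrow> ('m \<Rightarrow> 'm) \<Rightarrow> bool" where
  "linmap R M N f \<longleftrightarrow>
     f \<in> carrier M \<rightarrow> carrier N \<and>
     (\<forall>x\<in>carrier M. \<forall>y\<in>carrier M. f (x \<oplus>\<^bsub>M\<^esub> y) = f x \<oplus>\<^bsub>N\<^esub> f y) \<and>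
     (\<forall>a\<in>carrier R. \<forall>x\<in>carrier M. f (a \<odot>\<^bsub>M\<^esub> x) = a \<odot>\<^bsub>N\<^esub> f x)"

definition B_diagram ::
  "('r, 'c) ring_scheme \<Rightarrow> (vertex \<Rightarrow> ('r, 'm) module) \<Rightarrow> (vertex \<Rightarrow> 'm \<Rightarrow> 'm) \<Rightarrow> (vertex \<Rightarrow> 'm \<Rightarrow> 'm) \<Rightarrow> bool" where
  "B_diagram R M Om Mh \<longleftrightarrow>
     (\<forall>\<sigma>. module R (M \<sigma>)) \<and>
     (\<forall>\<sigma>. linmap R (M \<sigma>) (M (\<sigma> @ [True])) (Om \<sigma>)) \<and>
     (\<forall>\<sigma>. linmap R (M (\<sigma> @ [False])) (M \<sigma>) (Mh \<sigma>))"

definition kerOm :: "(vertex \<Rightarrow> ('r, 'm) module) \<Rightarrow> (vertex \<Rightarrow> 'm \<Rightarrow> 'm) \<Rightarrow> vertex \<Rightarrow> 'm set" where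
  "kerOm M Om \<sigma> = {x \<in> carrier (M \<sigma>). Om \<sigma> x = \<zero>\<^bsub>M (\<sigma> @ [True])\<^esub>}"

definition imMh :: "(vertex \<Rightarrow> ('r, 'm) module) \<Rightarrow> (vertex \<Rightarrow> 'm \<Rightarrow> 'm) \<Rightarrow> vertex \<Rightarrow> 'm set" where
  "imMh M Mh \<sigma> = Mh \<sigma> ` carrier (M (\<sigma> @ [False]))"

text \<open>A ray is determined by the sequence of appended symbols d :: nat => bool;
  its i-th vertex is sigma^i = [d 0, ..., d (i-1)], so sigma_i = + iff d (i-1).\<close>

definition ray_vertex :: "(nat \<Rightarrow> bool) \<Rightarrow> nat \<Rightarrow> vertex" where
  "ray_vertex d i = map d [0..<i]"

definition mu_tilde ::
  "(vertex \<Rightarrow> ('r, 'm) module) \<Rightarrow> (vertex \<Rightarrow> 'm \<Rightarrow> 'm) \<Rightarrow> (vertex \<Rightarrow> 'm \<Rightarrow> 'm) \<Rightarrow> (nat \<Rightarrow> bool) \<Rightarrow> nat \<Rightarrow> ('m \<times> 'm) set" where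
  "mu_tilde M Om Mh d i =
     (let v = ray_vertex d (i - 1) in
      if d (i - 1)
      then {(Om v y, y) | y. y \<in> carrier (M v)}
      else {(x, Mh v x) | x. x \<in> carrier (M (v @ [False]))})"

definition mu_le ::
  "(vertex \<Rightarrow> ('r, 'm) module) \<Rightarrow> (vertex \<Rightarrow> 'm \<Rightarrow> 'm) \<Rightarrow> (vertex \<Rightarrow> 'm \<Rightarrow> 'm) \<Rightarrow> (nat \<Rightarrow> bool) \<Rightarrow> nat \<Rightarrow> 'm set \<Rightarrow> 'm set" where
  "mu_le M Om Mh d n S =
     {m0 \<in> carrier (M []). \<exists>ms :: nat \<Rightarrow> 'm. ms 0 = m0 \<and> ms n \<in> S \<and>
        (\<forall>i\<in>{1..n}. (ms i, ms (i - 1)) \<in> mu_tilde M Om Mh d i)}"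

end

theory Submission
  imports Defs
begin

lemma linmap_zero:
  assumes "module R M" "module R N" "linmap R M N f"
  shows "f \<zero>\<^bsub>M\<^esub> = \<zero>\<^bsub>N\<^esub>"
proof -
  interpret M: module R M by fact
  interpret N: module R N by fact
  have f: "f \<zero>\<^bsub>M\<^esub> \<in> carrier N" using assms(3) unfolding linmap_def by auto
  have "f \<zero>\<^bsub>M\<^esub> \<oplus>\<^bsub>N\<^esub> f \<zero>\<^bsub>M\<^esub> = f \<zero>\<^bsub>M\<^esub>"
    using assms(3) f unfolding linmap_def by (metis M.zero_closed M.l_zero)
  then show ?thesis using f N.add.l_cancel_one[of "f \<zero>\<^bsub>M\<^esub>" "f \<zero>\<^bsub>M\<^esub>"] by simp
qed

definition reach :: "(vertex \<Rightarrow> ('r, 'm) module) \<Rightarrow> (vertex \<Rightarrow> 'm \<Rightarrow> 'm) \<Rightarrow> (vertex \<Rightarrow> 'm \<Rightarrow> 'm) \<Rightarrow> (nat \<Rightarrow> bool) \<Rightarrow> 'm \<Rightarrow> nat \<Rightarrow> 'm set" where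
  "reach M Om Mh d m j = {x. \<exists>ms. ms 0 = m \<and> ms j = x \<and>
        (\<forall>i\<in>{1..j}. (ms i, ms (i - 1)) \<in> mu_tilde M Om Mh d i)}"

lemma mem_mu_le:
  "m \<in> mu_le M Om Mh d j S \<longleftrightarrow> m \<in> carrier (M []) \<and> reach M Om Mh d m j \<inter> S \<noteq> {}"
  unfolding mu_le_def reach_def by blast

lemma reach_0: "reach M Om Mh d m 0 = {m}"
  unfolding reach_def by auto

lemma reach_Suc: "reach M Om Mh d m (Suc j) =
   {x. \<exists>y \<in> reach M Om Mh d m j. (x, y) \<in> mu_tilde M Om Mh d (Suc j)}"
proof safe
  fix x assume "x \<in> reach M Om Mh d m (Suc j)"
  then obtain ms where ms: "ms 0 = m" "ms (Suc j) = x"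
    "\<forall>i\<in>{1..Suc j}. (ms i, ms (i - 1)) \<in> mu_tilde M Om Mh d i"
    unfolding reach_def by blast
  have "ms j \<in> reach M Om Mh d m j" unfolding reach_def using ms by auto
  moreover have "(x, ms j) \<in> mu_tilde M Om Mh d (Suc j)" using ms(2,3) by force
  ultimately show "\<exists>y \<in> reach M Om Mh d m j. (x, y) \<in> mu_tilde M Om Mh d (Suc j)" by blast
next
  fix x y assume y: "y \<in> reach M Om Mh d m j" and xy: "(x, y) \<in> mu_tilde M Om Mh d (Suc j)"
  then obtain ms where ms: "ms 0 = m" "ms j = y"
    "\<forall>i\<in>{1..j}. (ms i, ms (i - 1)) \<in> mu_tilde M Om Mh d i"
    unfolding reach_def by blast
  define ms' where "ms' = ms(Suc j := x)"
  have "ms' 0 = m" "ms' (Suc j) = x" using ms unfolding ms'_def by auto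
  moreover have "\<forall>i\<in>{1..Suc j}. (ms' i, ms' (i - 1)) \<in> mu_tilde M Om Mh d i"
  proof
    fix i assume i: "i \<in> {1..Suc j}"
    show "(ms' i, ms' (i - 1)) \<in> mu_tilde M Om Mh d i"
    proof (cases "i = Suc j")
      case True then show ?thesis using xy ms(2) unfolding ms'_def by simp
    next
      case False then show ?thesis using i ms(3) unfolding ms'_def by auto
    qed
  qed
  ultimately show "x \<in> reach M Om Mh d m (Suc j)" unfolding reach_def by blast
qed

primrec st :: "(vertex \<Rightarrow> ('r, 'm) module) \<Rightarrow> (vertex \<Rightarrow> 'm \<Rightarrow> 'm) \<Rightarrow> (vertex \<Rightarrow> 'm \<Rightarrow> 'm) \<Rightarrow> 'm \<Rightarrow> nat \<Rightarrow> vertex \<times> 'm set" where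
  "st M Om Mh m 0 = ([], {m})"
| "st M Om Mh m (Suc n) = (let v = fst (st M Om Mh m n); S = snd (st M Om Mh m n);
      b = (S \<inter> imMh M Mh v = {}) in
      (v @ [b], if b then Om v ` (S \<inter> carrier (M v)) else {x \<in> carrier (M (v @ [False])). Mh v x \<in> S}))"

lemma ray_vertex_Suc: "ray_vertex d (Suc j) = ray_vertex d j @ [d j]"
  unfolding ray_vertex_def by simp

lemma st_fst:
  assumes "d = (\<lambda>j. snd (st M Om Mh m j) \<inter> imMh M Mh (fst (st M Om Mh m j)) = {})"
  shows "fst (st M Om Mh m j) = ray_vertex d j"
  by (induction j) (auto simp: assms ray_vertex_Suc Let_def, simp add: ray_vertex_def)

lemma st_snd:
  assumes "d = (\<lambda>j. snd (st M Om Mh m j) \<inter> imMh M Mh (fst (st M Om Mh m j)) = {})"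
  shows "reach M Om Mh d m j = snd (st M Om Mh m j)"
proof (induction j)
  case 0 then show ?case by (simp add: reach_0)
next
  case (Suc j)
  have v: "ray_vertex d j = fst (st M Om Mh m j)" using st_fst[OF assms] by simp
  have b: "(snd (st M Om Mh m j) \<inter> imMh M Mh (fst (st M Om Mh m j)) = {}) = d j"
    unfolding assms by simp
  have e: "st M Om Mh m (Suc j) = (ray_vertex d j @ [d j], if d j then Om (ray_vertex d j) ` (snd (st M Om Mh m j) \<inter> carrier (M (ray_vertex d j))) else {x \<in> carrier (M (ray_vertex d j @ [False])). Mh (ray_vertex d j) x \<in> snd (st M Om Mh m j)})"
    by (simp only: st.simps Let_def b v)
  show ?case
  proof (cases "d j")
    case True
    then show ?thesis unfolding reach_Suc Suc e mu_tilde_def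
      by (auto simp: Let_def)
  next
    case False
    then show ?thesis unfolding reach_Suc Suc e mu_tilde_def
      by (auto simp: Let_def)
  qed
qed

theorem lemma5p12:
  fixes R :: "('r, 'c) ring_scheme"
    and M :: "vertex \<Rightarrow> ('r, 'm) module"
    and Om Mh :: "vertex \<Rightarrow> 'm \<Rightarrow> 'm"
    and m :: 'm
  assumes "cring R"
    and "B_diagram R M Om Mh"
    and "\<And>\<sigma>. imMh M Mh \<sigma> \<subseteq> kerOm M Om \<sigma>"
    and "m \<in> carrier (M [])"
    and "m \<noteq> \<zero>\<^bsub>M []\<^esub>"
  shows "\<exists>d :: nat \<Rightarrow> bool.
    (let P1 = (\<exists>j::nat. m \<in> mu_le M Om Mh d j (kerOm M Om (ray_vertex d j))
                            - mu_le M Om Mh d j (imMh M Mh (ray_vertex d j)));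
         P2 = ((\<forall>j::nat. m \<in> mu_le M Om Mh d j (carrier (M (ray_vertex d j)))
                            - mu_le M Om Mh d j {\<zero>\<^bsub>M (ray_vertex d j)\<^esub>}) \<and>
               m \<in> (\<Inter>i. mu_le M Om Mh d i (carrier (M (ray_vertex d i))))
                    - (\<Union>i. mu_le M Om Mh d i {\<zero>\<^bsub>M (ray_vertex d i)\<^esub>}))
     in (P1 \<and> \<not> P2) \<or> (\<not> P1 \<and> P2))"
proof -
  define d where "d = (\<lambda>j. snd (st M Om Mh m j) \<inter> imMh M Mh (fst (st M Om Mh m j)) = {})"
  define S where "S j = snd (st M Om Mh m j)" for j
  have V: "fst (st M Om Mh m j) = ray_vertex d j" for j using st_fst[OF d_def] .
  have RS: "reach M Om Mh d m j = S j" for j using st_snd[OF d_def] S_def by simp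
  have mod: "module R (M \<sigma>)" for \<sigma> using assms(2) unfolding B_diagram_def by auto
  have lOm: "linmap R (M \<sigma>) (M (\<sigma> @ [True])) (Om \<sigma>)" for \<sigma> using assms(2) unfolding B_diagram_def by auto
  have lMh: "linmap R (M (\<sigma> @ [False])) (M \<sigma>) (Mh \<sigma>)" for \<sigma> using assms(2) unfolding B_diagram_def by auto
  have Mh0: "Mh \<sigma> \<zero>\<^bsub>M (\<sigma> @ [False])\<^esub> = \<zero>\<^bsub>M \<sigma>\<^esub>" for \<sigma> using linmap_zero[OF mod mod lMh] .
  have SSuc: "S (Suc j) = (if d j then Om (ray_vertex d j) ` (S j \<inter> carrier (M (ray_vertex d j)))
      else {x \<in> carrier (M (ray_vertex d j @ [False])). Mh (ray_vertex d j) x \<in> S j})" for j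
    unfolding S_def using V[of j] by (simp add: Let_def d_def)
  have dj: "d j \<longleftrightarrow> S j \<inter> imMh M Mh (ray_vertex d j) = {}" for j
  proof -
    have "d j \<longleftrightarrow> S j \<inter> imMh M Mh (fst (st M Om Mh m j)) = {}" unfolding d_def S_def by simp
    then show ?thesis using V[of j] by simp
  qed
  have Scar: "S j \<subseteq> carrier (M (ray_vertex d j))" for j
  proof (induction j)
    case 0 then show ?case using assms(4) by (simp add: S_def ray_vertex_def)
  next
    case (Suc j)
    show ?case
    proof (cases "d j")
      case True
      then show ?thesis using lOm[of "ray_vertex d j"] unfolding SSuc ray_vertex_Suc linmap_def
        by auto
    next
      case False
      then show ?thesis unfolding SSuc ray_vertex_Suc by auto
    qed
  qed
  have mu: "m \<in> mu_le M Om Mh d j T \<longleftrightarrow> S j \<inter> T \<noteq> {}" for j T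
    using mem_mu_le RS assms(4) by metis
  define P1j where "P1j j \<longleftrightarrow> S j \<inter> kerOm M Om (ray_vertex d j) \<noteq> {} \<and> S j \<inter> imMh M Mh (ray_vertex d j) = {}" for j
  define Q where "Q j \<longleftrightarrow> S j \<inter> carrier (M (ray_vertex d j)) \<noteq> {} \<and> S j \<inter> {\<zero>\<^bsub>M (ray_vertex d j)\<^esub>} = {}" for j
  have P1eq: "(\<exists>j::nat. m \<in> mu_le M Om Mh d j (kerOm M Om (ray_vertex d j))
                            - mu_le M Om Mh d j (imMh M Mh (ray_vertex d j))) \<longleftrightarrow> (\<exists>j. P1j j)"
    unfolding P1j_def using mu by auto
  have P2eq: "((\<forall>j::nat. m \<in> mu_le M Om Mh d j (carrier (M (ray_vertex d j)))
                            - mu_le M Om Mh d j {\<zero>\<^bsub>M (ray_vertex d j)\<^esub>}) \<and>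
               m \<in> (\<Inter>i. mu_le M Om Mh d i (carrier (M (ray_vertex d i))))
                    - (\<Union>i. mu_le M Om Mh d i {\<zero>\<^bsub>M (ray_vertex d i)\<^esub>})) \<longleftrightarrow> (\<forall>j. Q j)"
    unfolding Q_def using mu by auto
  show ?thesis
  proof (rule exI[of _ d], unfold Let_def P1eq P2eq, cases "\<exists>j. P1j j")
    case True
    then obtain j where j: "P1j j" by blast
    then have "d j" using dj P1j_def by auto
    from j obtain y where y: "y \<in> S j" "y \<in> kerOm M Om (ray_vertex d j)" unfolding P1j_def by auto
    then have "\<zero>\<^bsub>M (ray_vertex d (Suc j))\<^esub> \<in> S (Suc j)"
      
    proof -
      have "y \<in> carrier (M (ray_vertex d j))" "Om (ray_vertex d j) y = \<zero>\<^bsub>M (ray_vertex d j @ [True])\<^esub>"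
        using y(2) by (auto simp: kerOm_def)
      then have "\<zero>\<^bsub>M (ray_vertex d j @ [True])\<^esub> \<in> Om (ray_vertex d j) ` (S j \<inter> carrier (M (ray_vertex d j)))"
        using y(1) by (metis IntI image_eqI)
      then show ?thesis unfolding SSuc ray_vertex_Suc using \<open>d j\<close> by simp
    qed
    then have "\<not> Q (Suc j)" unfolding Q_def by auto
    then show "((\<exists>j. P1j j) \<and> \<not> (\<forall>j. Q j)) \<or> (\<not> (\<exists>j. P1j j) \<and> (\<forall>j. Q j))" using True by blast
  next
    case False
    have "Q j" for j
    proof (induction j)
      case 0 then show ?case using assms(4,5) by (simp add: Q_def S_def ray_vertex_def)
    next
      case (Suc j)
      have np: "\<not> P1j j" using False by blast
      have ne: "S j \<noteq> {}" and n0: "\<zero>\<^bsub>M (ray_vertex d j)\<^esub> \<notin> S j" using Suc by (auto simp: Q_def)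
      show ?case
      proof (cases "d j")
        case True
        then have "S j \<inter> imMh M Mh (ray_vertex d j) = {}" using dj by simp
        then have nk: "S j \<inter> kerOm M Om (ray_vertex d j) = {}" using np P1j_def by simp
        have "S (Suc j) \<noteq> {}" using True ne Scar[of j] unfolding SSuc by auto
        moreover have "\<zero>\<^bsub>M (ray_vertex d (Suc j))\<^esub> \<notin> S (Suc j)"
          using True nk Scar[of j] unfolding SSuc ray_vertex_Suc by (auto simp: kerOm_def)
        ultimately show ?thesis using Scar[of "Suc j"] unfolding Q_def by auto
      next
        case False
        then obtain y where y: "y \<in> S j" "y \<in> imMh M Mh (ray_vertex d j)" using dj by auto
        then obtain x where x: "x \<in> carrier (M (ray_vertex d j @ [False]))" "Mh (ray_vertex d j) x = y"
          unfolding imMh_def by auto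
        have "x \<in> S (Suc j)" using x y False unfolding SSuc by auto
        moreover have "\<zero>\<^bsub>M (ray_vertex d (Suc j))\<^esub> \<notin> S (Suc j)"
          using False n0 Mh0[of "ray_vertex d j"] unfolding SSuc ray_vertex_Suc by auto
        ultimately show ?thesis using Scar[of "Suc j"] unfolding Q_def by auto
      qed
    qed
    then show "((\<exists>j. P1j j) \<and> \<not> (\<forall>j. Q j)) \<or> (\<not> (\<exists>j. P1j j) \<and> (\<forall>j. Q j))" using False by blast
  qed
qed

end
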